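(* Let $(p_0,\dots,p_{n-1})$ be a closed discrete curve with $l_k=l_0$ for all $k$ (arclength parametrized), and let $\kappa\in\mathbb{R}\setminus\{0\}$. Then the curve is an equilibrium of $L+\kappa\mathrm{Vol}$ (i.e. $\nabla_{p_k}L+\kappa\nabla_{p_k}\mathrm{Vol}=0$ for all $k$) if and only if $\theta_k\neq\pi$ for all $k$ and the discrete curvature $\frac{2}{l_0}\tan(\theta_k/2)$ equals $\kappa$ for every $k$.
   Context: A closed discrete curve is an $n$-tuple $(p_0,\dots,p_{n-1})$ of points of $\mathbb{R}^2$ ($n\ge3$), indices modulo $n$, with $l_k:=|p_{k+1}-p_k|\ne0$ for all $k$. $R_\varphi$ denotes rotation of $\mathbb{R}^2$ by $\varphi$. Fix $R\in\{R_{\pi/2},R_{-\pi/2}\}$ and set $\sigma=+1$ if $R=R_{\pi/2}$, $\sigma=-1$ if $R=R_{-\pi/2}$. Edge normal $\nu_k:=R((p_{k+1}-p_k)/l_k)$. The signed angle $\theta_k\in(-\pi,\pi]$ at vertex $p_k$ is defined by $\nu_k=R_{\sigma\theta_k}\nu_{k-1}$. Length $L=\sum_k l_k$, area $\mathrm{Vol}=\frac12\sum_k\langle p_k,\nu_k\rangle l_k$, both functions on $(\mathbb{R}^2)^n$; $\nabla_{p_k}$ is the gradient with respect to $p_k$. *)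

theory Defs
  imports "HOL-Analysis.Analysis"
begin

text \<open>Points of the plane are modelled as complex numbers (the Euclidean plane R^2,
  with inner product Re (z * cnj w)). A configuration of n points is a map
  p :: nat => complex of which only p 0, ..., p (n-1) matter; indices are taken mod n.\<close>

definition rot :: "real \<Rightarrow> complex \<Rightarrow> complex" where
  "rot \<phi> z = cis \<phi> * z"

definition edge :: "nat \<Rightarrow> (nat \<Rightarrow> complex) \<Rightarrow> nat \<Rightarrow> complex" where
  "edge n p k = p ((k + 1) mod n) - p (k mod n)"

definition elen :: "nat \<Rightarrow> (nat \<Rightarrow> complex) \<Rightarrow> nat \<Rightarrow> real" where
  "elen n p k = cmod (edge n p k)"

definition closed_discrete_curve :: "nat \<Rightarrow> (nat \<Rightarrow> complex) \<Rightarrow> bool" where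
  "closed_discrete_curve n p \<longleftrightarrow> n \<ge> 3 \<and> (\<forall>k<n. elen n p k \<noteq> 0)"

text \<open>sigma = 1 means R = R_{pi/2}, sigma = -1 means R = R_{-pi/2}.\<close>
definition normal :: "real \<Rightarrow> nat \<Rightarrow> (nat \<Rightarrow> complex) \<Rightarrow> nat \<Rightarrow> complex" where
  "normal \<sigma> n p k = rot (\<sigma> * pi / 2) (edge n p k / of_real (elen n p k))"

definition signed_angle :: "real \<Rightarrow> nat \<Rightarrow> (nat \<Rightarrow> complex) \<Rightarrow> nat \<Rightarrow> real" where
  "signed_angle \<sigma> n p k = (THE t. t \<in> {-pi<..pi} \<and>
      normal \<sigma> n p k = rot (\<sigma> * t) (normal \<sigma> n p ((k + n - 1) mod n)))"

definition curve_length :: "nat \<Rightarrow> (nat \<Rightarrow> complex) \<Rightarrow> real" where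
  "curve_length n p = (\<Sum>k<n. elen n p k)"

definition curve_area :: "real \<Rightarrow> nat \<Rightarrow> (nat \<Rightarrow> complex) \<Rightarrow> real" where
  "curve_area \<sigma> n p = (1/2) * (\<Sum>k<n. inner (p k) (normal \<sigma> n p k) * elen n p k)"

definition pgrad :: "((nat \<Rightarrow> complex) \<Rightarrow> real) \<Rightarrow> (nat \<Rightarrow> complex) \<Rightarrow> nat \<Rightarrow> complex" where
  "pgrad F p k = (SOME D. GDERIV (\<lambda>x. F (p(k := x))) (p k) :> D)"

end

theory Submission
  imports Defs
begin


lemma pgrad_eq:
  assumes "GDERIV (\<lambda>x. F (p(k := x))) (p k) :> D"
  shows "pgrad F p k = D"
proof -
  have ex: "\<exists>D. GDERIV (\<lambda>x. F (p(k := x))) (p k) :> D" using assms by blast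
  let ?D = "SOME D. GDERIV (\<lambda>x. F (p(k := x))) (p k) :> D"
  have "GDERIV (\<lambda>x. F (p(k := x))) (p k) :> ?D" using someI_ex[OF ex] .
  then have "(\<lambda>h. inner h ?D) = (\<lambda>h. inner h D)"
    using assms unfolding gderiv_def by (rule has_derivative_unique)
  then have "inner (?D - D) ?D = inner (?D - D) D" by metis
  then have "inner (?D - D) (?D - D) = 0" by (simp add: inner_diff_right)
  then show ?thesis unfolding pgrad_def by simp
qed

lemma GDERIV_sum:
  assumes "\<And>j. j \<in> S \<Longrightarrow> GDERIV (f j) x :> D j"
  shows "GDERIV (\<lambda>x. \<Sum>j\<in>S. f j x) x :> (\<Sum>j\<in>S. D j)"
  using assms unfolding gderiv_def inner_sum_right
  by (rule has_derivative_sum)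

lemma GDERIV_norm_affine:
  fixes E x0 :: complex
  assumes "E \<noteq> 0"
  shows "GDERIV (\<lambda>x. cmod (E + of_real c * (x - x0))) x0 :> c *\<^sub>R sgn E"
proof -
  have d: "((\<lambda>x. E + of_real c * (x - x0)) has_derivative (\<lambda>h. of_real c * h)) (at x0)"
    by (auto intro!: derivative_eq_intros)
  have "((\<lambda>x. cmod (E + of_real c * (x - x0))) has_derivative (\<lambda>h. inner (of_real c * h) (sgn E))) (at x0)"
  proof -
    have n: "(cmod has_derivative (\<lambda>h. inner h (sgn E))) (at ((\<lambda>x. E + of_real c * (x - x0)) x0))"
      using has_derivative_norm[OF assms] by simp
    show ?thesis using has_derivative_compose[OF d n] by simp
  qed
  moreover have "(\<lambda>h. inner (of_real c * h) (sgn E)) = (\<lambda>h. inner h (c *\<^sub>R sgn E))"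
    by (auto simp: inner_complex_def algebra_simps)
  ultimately show ?thesis unfolding gderiv_def by simp
qed

lemma GDERIV_inner_affine:
  fixes P E I x0 :: complex
  shows "GDERIV (\<lambda>x. inner (P + of_real \<alpha> * (x - x0)) (I * (E + of_real \<beta> * (x - x0)))) x0
     :> \<alpha> *\<^sub>R (I * E) + \<beta> *\<^sub>R (cnj I * P)"
proof -
  have "((\<lambda>x. inner (P + of_real \<alpha> * (x - x0)) (I * (E + of_real \<beta> * (x - x0)))) has_derivative
     (\<lambda>h. inner (P + of_real \<alpha> * (x0 - x0)) (I * (of_real \<beta> * h)) + inner (of_real \<alpha> * h) (I * (E + of_real \<beta> * (x0 - x0))))) (at x0)"
    by (rule has_derivative_inner) (auto intro!: derivative_eq_intros)
  moreover have "(\<lambda>h. inner (P + of_real \<alpha> * (x0 - x0)) (I * (of_real \<beta> * h)) + inner (of_real \<alpha> * h) (I * (E + of_real \<beta> * (x0 - x0))))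
     = (\<lambda>h. inner h (\<alpha> *\<^sub>R (I * E) + \<beta> *\<^sub>R (cnj I * P)))"
    by (auto simp: inner_complex_def algebra_simps)
  ultimately show ?thesis unfolding gderiv_def by simp
qed

lemma sum_shift:
  fixes X :: "nat \<Rightarrow> 'a::real_vector"
  assumes "k < n"
  shows "(\<Sum>j<n. ((if (j+1) mod n = k then 1 else 0) - (if j mod n = k then 1 else 0 :: real)) *\<^sub>R X j)
    = X ((k + n - 1) mod n) - X k"
proof -
  have e: "j < n \<Longrightarrow> ((j+1) mod n = k) = (j = (k + n - 1) mod n)" for j
  proof -
    assume j: "j < n"
    show ?thesis
    proof (cases "j + 1 = n")
      case True then show ?thesis using assms j
        by (cases k) (auto simp: mod_add_self2)
    next
      case False then have "(j+1) mod n = j+1" using j by simp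
      moreover have "((k + n - 1) mod n) = (if k = 0 then n - 1 else k - 1)"
        using assms by (cases k) auto
      ultimately show ?thesis using False j assms by auto
    qed
  qed
  have "(\<Sum>j<n. ((if (j+1) mod n = k then 1 else 0) - (if j mod n = k then 1 else 0 :: real)) *\<^sub>R X j)
    = (\<Sum>j<n. (if j = (k + n - 1) mod n then X j else 0)) - (\<Sum>j<n. (if j = k then X j else 0))"
    unfolding sum_subtractf[symmetric]
  proof (rule sum.cong)
    fix j assume "j \<in> {..<n}"
    then have j: "j < n" by simp
    show "((if (j+1) mod n = k then 1 else 0) - (if j mod n = k then 1 else 0 :: real)) *\<^sub>R X j
      = (if j = (k + n - 1) mod n then X j else 0) - (if j = k then X j else 0)"
      unfolding e[OF j] mod_less[OF j] by simp
  qed simp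
  also have "\<dots> = X ((k + n - 1) mod n) - X k" using assms by simp
  finally show ?thesis .
qed


lemma GDERIV_cmult:
  assumes "GDERIV f x :> D"
  shows "GDERIV (\<lambda>x. r * f x) x :> r *\<^sub>R D"
  using has_derivative_mult_right[OF assms[unfolded gderiv_def], of r]
  unfolding gderiv_def by (simp add: inner_scaleR_right)

lemma upd_affine: "(p(k:=x)) m = p m + of_real (if m = k then 1 else 0) * (x - p k)"
  by simp

lemma edge_upd:
  "edge n (p(k:=x)) j = edge n p j + of_real ((if (j+1) mod n = k then 1 else 0) - (if j mod n = k then 1 else 0 :: real)) * (x - p k)"
  unfolding edge_def by (simp add: algebra_simps)

lemma grad_L:
  assumes "closed_discrete_curve n p" "k < n"
  shows "pgrad (curve_length n) p k = sgn (edge n p ((k+n-1) mod n)) - sgn (edge n p k)"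
proof (rule pgrad_eq)
  define c where "c j = ((if (j+1) mod n = k then 1 else 0) - (if j mod n = k then 1 else 0 :: real))" for j
  have eq: "(\<lambda>x. curve_length n (p(k := x))) = (\<lambda>x. \<Sum>j<n. cmod (edge n p j + of_real (c j) * (x - p k)))"
    unfolding curve_length_def elen_def edge_upd c_def ..
  have "GDERIV (\<lambda>x. \<Sum>j<n. cmod (edge n p j + of_real (c j) * (x - p k))) (p k) :> (\<Sum>j<n. c j *\<^sub>R sgn (edge n p j))"
    apply (rule GDERIV_sum)
    apply (rule GDERIV_norm_affine)
    using assms(1) unfolding closed_discrete_curve_def elen_def by auto
  also have "(\<Sum>j<n. c j *\<^sub>R sgn (edge n p j)) = sgn (edge n p ((k+n-1) mod n)) - sgn (edge n p k)"
    unfolding c_def by (rule sum_shift[OF assms(2)])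
  finally show "GDERIV (\<lambda>x. curve_length n (p(k := x))) (p k) :> sgn (edge n p ((k+n-1) mod n)) - sgn (edge n p k)"
    unfolding eq .
qed

lemma inner_normal:
  "inner z (normal \<sigma> n q j) * elen n q j = inner z (cis (\<sigma> * pi / 2) * edge n q j)"
proof (cases "elen n q j = 0")
  case True
  then have "edge n q j = 0" unfolding elen_def by simp
  then show ?thesis using True by simp
next
  case False
  then show ?thesis unfolding normal_def rot_def
    by (simp add: inner_complex_def field_simps)
qed

lemma grad_V:
  assumes "closed_discrete_curve n p" "k < n"
  shows "pgrad (curve_area \<sigma> n) p k = (1/2) *\<^sub>R (cis (\<sigma> * pi / 2) * edge n p k
      + (cnj (cis (\<sigma> * pi / 2)) * p ((k+n-1) mod n) - cnj (cis (\<sigma> * pi / 2)) * p k))"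
proof (rule pgrad_eq)
  define I where "I = cis (\<sigma> * pi / 2)"
  define c where "c j = ((if (j+1) mod n = k then 1 else 0) - (if j mod n = k then 1 else 0 :: real))" for j
  define a where "a j = (if j = k then 1 else 0 :: real)" for j
  have eq: "(\<lambda>x. curve_area \<sigma> n (p(k := x))) = (\<lambda>x. (1/2) * (\<Sum>j<n. inner (p j + of_real (a j) * (x - p k)) (I * (edge n p j + of_real (c j) * (x - p k)))))"
    unfolding curve_area_def inner_normal I_def
    unfolding edge_upd c_def a_def upd_affine[of p k] ..
  have "GDERIV (\<lambda>x. (1/2) * (\<Sum>j<n. inner (p j + of_real (a j) * (x - p k)) (I * (edge n p j + of_real (c j) * (x - p k))))) (p k)
     :> (1/2) *\<^sub>R (\<Sum>j<n. a j *\<^sub>R (I * edge n p j) + c j *\<^sub>R (cnj I * p j))"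
    by (intro GDERIV_cmult GDERIV_sum GDERIV_inner_affine)
  also have "(\<Sum>j<n. a j *\<^sub>R (I * edge n p j) + c j *\<^sub>R (cnj I * p j))
      = (\<Sum>j<n. a j *\<^sub>R (I * edge n p j)) + (\<Sum>j<n. c j *\<^sub>R (cnj I * p j))"
    by (rule sum.distrib)
  also have "(\<Sum>j<n. a j *\<^sub>R (I * edge n p j)) = I * edge n p k"
  proof -
    have "(\<Sum>j<n. a j *\<^sub>R (I * edge n p j)) = (\<Sum>j<n. if j = k then I * edge n p j else 0)"
      by (rule sum.cong) (auto simp: a_def)
    then show ?thesis using assms(2) by simp
  qed
  also have "(\<Sum>j<n. c j *\<^sub>R (cnj I * p j)) = cnj I * p ((k+n-1) mod n) - cnj I * p k"
    unfolding c_def by (rule sum_shift[OF assms(2)])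
  finally show "GDERIV (\<lambda>x. curve_area \<sigma> n (p(k := x))) (p k) :> (1/2) *\<^sub>R (cis (\<sigma> * pi / 2) * edge n p k
      + (cnj (cis (\<sigma> * pi / 2)) * p ((k+n-1) mod n) - cnj (cis (\<sigma> * pi / 2)) * p k))"
    unfolding eq I_def .
qed


lemma trig_eq:
  "1 - cis (2*\<phi>) + \<i> * of_real c * (1 + cis (2*\<phi>)) = 0 \<longleftrightarrow> sin \<phi> = c * cos \<phi>"
proof -
  have "1 - cis (2*\<phi>) + \<i> * of_real c * (1 + cis (2*\<phi>)) = complex_of_real (2 * (sin \<phi> - c * cos \<phi>)) * (sin \<phi> - \<i> * cos \<phi>)"
  proof -
    have a: "cos (2*\<phi>) = 1 - 2*(sin \<phi>)^2" by (rule cos_double_sin)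
    have b: "sin (2*\<phi>) = 2 * sin \<phi> * cos \<phi>" by (rule sin_double)
    have a': "cos (\<phi>*2) = 1 - 2*(sin \<phi>)^2" using a by (simp add: mult.commute)
    have b': "sin (\<phi>*2) = 2 * sin \<phi> * cos \<phi>" using b by (simp add: mult.commute)
    have q: "(sin \<phi>)^2 + (cos \<phi>)^2 = 1" by simp
    have r: "c * (cos \<phi> * (cos \<phi> * 2)) + c * (sin \<phi> * (sin \<phi> * 2)) = c*2"
    proof -
      have e: "cos \<phi> * cos \<phi> + sin \<phi> * sin \<phi> = 1" by (metis sin_cos_squared_add3 add.commute)
      have "c * (cos \<phi> * (cos \<phi> * 2)) + c * (sin \<phi> * (sin \<phi> * 2)) = 2*c*(cos \<phi> * cos \<phi> + sin \<phi> * sin \<phi>)"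
        by (simp only: ring_distribs mult.assoc mult.commute mult.left_commute)
      also have "\<dots> = c*2" using e by simp
      finally show ?thesis .
    qed
    show ?thesis unfolding complex_eq_iff
      by (simp add: a b a' b' algebra_simps power2_eq_square) (metis r)
  qed
  moreover have "sin \<phi> - \<i> * cos \<phi> \<noteq> 0"
    by (simp add: complex_eq_iff) (metis sin_zero_abs_cos_one abs_zero zero_neq_one)
  ultimately show ?thesis by (simp only: mult_eq_0_iff of_real_eq_0_iff) auto
qed

lemma sgn_edge: "edge n p j / of_real (cmod (edge n p j)) = sgn (edge n p j)"
  by (simp add: sgn_div_norm divide_inverse scaleR_conv_of_real mult.commute)

lemma angle_prop:
  assumes s: "\<sigma> = 1 \<or> \<sigma> = -1" and c: "closed_discrete_curve n p" and k: "k < n"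
  shows "signed_angle \<sigma> n p k \<in> {-pi<..pi} \<and>
    sgn (edge n p k) = cis (\<sigma> * signed_angle \<sigma> n p k) * sgn (edge n p ((k + n - 1) mod n))"
proof -
  define k' where "k' = (k + n - 1) mod n"
  have n0: "n > 0" using k by simp
  have k'n: "k' < n" unfolding k'_def using n0 by simp
  have ne: "edge n p j \<noteq> 0" if "j < n" for j using c that unfolding closed_discrete_curve_def elen_def by auto
  define T where "T j = sgn (edge n p j)" for j
  have T1: "j < n \<Longrightarrow> cmod (T j) = 1" for j using ne unfolding T_def by (simp add: norm_sgn)
  have T0: "T k' \<noteq> 0" using T1[OF k'n] by auto
  have nor: "normal \<sigma> n p j = cis (\<sigma> * pi / 2) * T j" for j
    unfolding normal_def rot_def elen_def sgn_edge T_def ..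
  define P where "P t = (t \<in> {-pi<..pi} \<and> normal \<sigma> n p k = rot (\<sigma> * t) (normal \<sigma> n p k'))" for t
  have Peq: "P t \<longleftrightarrow> t \<in> {-pi<..pi} \<and> T k = cis (\<sigma> * t) * T k'" for t
    unfolding P_def nor rot_def by (auto simp: mult.left_commute)
  define u where "u = T k / T k'"
  have u1: "cmod u = 1" unfolding u_def using T1[OF k] T1[OF k'n] by (simp add: norm_divide)
  have "u \<noteq> 0" using u1 by auto
  define t0 where "t0 = Arg (if \<sigma> = 1 then u else cnj u)"
  have "cis (\<sigma> * t0) = u"
  proof (cases "\<sigma> = 1")
    case True then show ?thesis unfolding t0_def using cis_Arg[OF \<open>u \<noteq> 0\<close>] u1
      by (simp add: sgn_div_norm)
  next
    case False
    then have "\<sigma> = -1" using s by auto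
    moreover have "cnj u \<noteq> 0" using \<open>u \<noteq> 0\<close> by simp
    ultimately show ?thesis unfolding t0_def using cis_Arg[of "cnj u"] u1 False
      by (simp add: sgn_div_norm cis_cnj[symmetric])
  qed
  then have "P t0" unfolding Peq u_def using Arg_bounded[of "if \<sigma> = 1 then u else cnj u"] T0
    by (auto simp: t0_def)
  moreover have "t = t0" if "P t" for t
  proof -
    have "cis (\<sigma> * t) * T k' = cis (\<sigma> * t0) * T k'" using that \<open>P t0\<close> unfolding Peq by auto
    then have e: "cis (\<sigma> * t) = cis (\<sigma> * t0)" using T0 by simp
    have "cis t = cis t0"
    proof (cases "\<sigma> = 1")
      case True then show ?thesis using e by simp
    next
      case False then have "\<sigma> = -1" using s by auto
      then have "cnj (cis (\<sigma> * t)) = cnj (cis (\<sigma> * t0))" using e by simp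
      then show ?thesis using \<open>\<sigma> = -1\<close> by (simp add: cis_cnj)
    qed
    moreover have "Arg (cis t) = t" using that unfolding Peq by (intro cis_Arg_unique) auto
    moreover have "Arg (cis t0) = t0" using \<open>P t0\<close> unfolding Peq by (intro cis_Arg_unique) auto
    ultimately show ?thesis by metis
  qed
  ultimately have "P (THE t. P t)" by (rule theI)
  moreover have "signed_angle \<sigma> n p k = (THE t. P t)"
    unfolding signed_angle_def P_def k'_def ..
  ultimately show ?thesis unfolding Peq T_def k'_def by simp
qed


lemma final_trig:
  assumes "-pi < \<theta>" "\<theta> \<le> pi" "l > 0"
  shows "sin (\<theta>/2) = (\<kappa>*l/2) * cos (\<theta>/2) \<longleftrightarrow> \<theta> \<noteq> pi \<and> 2 / l * tan (\<theta>/2) = \<kappa>"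
proof (cases "\<theta> = pi")
  case True then show ?thesis by simp
next
  case False
  then have "-pi/2 < \<theta>/2" "\<theta>/2 < pi/2" using assms by auto
  then have "cos (\<theta>/2) > 0" by (intro cos_gt_zero_pi) auto
  then show ?thesis using False assms by (auto simp: tan_def field_simps)
qed

lemma per_k:
  assumes s: "\<sigma> = 1 \<or> \<sigma> = -1" and c: "closed_discrete_curve n p"
    and l: "\<forall>k<n. elen n p k = elen n p 0" and k: "k < n"
  shows "pgrad (curve_length n) p k + of_real \<kappa> * pgrad (curve_area \<sigma> n) p k = 0
     \<longleftrightarrow> signed_angle \<sigma> n p k \<noteq> pi \<and> 2 / elen n p 0 * tan (signed_angle \<sigma> n p k / 2) = \<kappa>"
proof -
  define k' where "k' = (k + n - 1) mod n"
  define \<theta> where "\<theta> = signed_angle \<sigma> n p k"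
  define L where "L = elen n p 0"
  define X where "X = sgn (edge n p k')"
  define u where "u = cis (\<sigma> * \<theta>)"
  define I where "I = cis (\<sigma> * pi / 2)"
  have n0: "n > 0" using k by simp
  have k'n: "k' < n" unfolding k'_def using n0 by simp
  have ne: "edge n p j \<noteq> 0" if "j < n" for j using c that unfolding closed_discrete_curve_def elen_def by auto
  have L0: "L > 0" using ne[OF n0] unfolding L_def elen_def by simp
  have ang: "\<theta> \<in> {-pi<..pi}" "sgn (edge n p k) = u * X"
    using angle_prop[OF s c k] unfolding \<theta>_def u_def X_def k'_def by auto
  have ed: "edge n p j = of_real L * sgn (edge n p j)" if "j < n" for j
  proof -
    have "edge n p j = of_real (cmod (edge n p j)) * sgn (edge n p j)"
      using ne[OF that] sgn_edge[of n p j] by (metis nonzero_mult_div_cancel_left norm_eq_zero of_real_eq_0_iff times_divide_eq_right)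
    moreover have "cmod (edge n p j) = L" using l that unfolding L_def elen_def by blast
    ultimately show ?thesis by simp
  qed
  have ek: "edge n p k = of_real L * u * X" using ed[OF k] ang(2) by simp
  have ek': "edge n p k' = of_real L * X" using ed[OF k'n] unfolding X_def by simp
  have k'1: "(k' + 1) mod n = k"
    unfolding k'_def using k by (cases k) (auto simp: mod_Suc_eq)
  have pk: "p k' - p k = - edge n p k'" unfolding edge_def k'1 using k'n by simp
  have I: "I = \<i> * of_real \<sigma>" "cnj I = - I" using s unfolding I_def by auto
  have X0: "X \<noteq> 0" using ne[OF k'n] unfolding X_def by (simp add: sgn_zero_iff)
  have "pgrad (curve_length n) p k + of_real \<kappa> * pgrad (curve_area \<sigma> n) p k
     = X * (1 - u + \<i> * of_real (\<kappa> * L * \<sigma> / 2) * (1 + u))"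
    unfolding grad_L[OF c k] grad_V[OF c k] I_def[symmetric] k'_def[symmetric]
    unfolding right_diff_distrib[symmetric] X_def[symmetric] ang(2)
    unfolding pk ek ek'
    by (simp add: I scaleR_conv_of_real algebra_simps)
  then have "pgrad (curve_length n) p k + of_real \<kappa> * pgrad (curve_area \<sigma> n) p k = 0
     \<longleftrightarrow> 1 - cis (2 * (\<sigma> * \<theta> / 2)) + \<i> * of_real (\<kappa> * L * \<sigma> / 2) * (1 + cis (2 * (\<sigma> * \<theta> / 2))) = 0"
    using X0 unfolding u_def by simp
  also have "\<dots> \<longleftrightarrow> sin (\<sigma> * \<theta> / 2) = (\<kappa> * L * \<sigma> / 2) * cos (\<sigma> * \<theta> / 2)"
    by (rule trig_eq)
  also have "\<dots> \<longleftrightarrow> sin (\<theta>/2) = (\<kappa>*L/2) * cos (\<theta>/2)"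
    using s by auto
  also have "\<dots> \<longleftrightarrow> \<theta> \<noteq> pi \<and> 2 / L * tan (\<theta>/2) = \<kappa>"
    using ang(1) L0 by (intro final_trig) auto
  finally show ?thesis unfolding \<theta>_def L_def .
qed

theorem mainTheorem5:
  fixes n :: nat and p :: "nat \<Rightarrow> complex" and \<sigma> \<kappa> :: real
  assumes "\<sigma> = 1 \<or> \<sigma> = -1"
    and "closed_discrete_curve n p"
    and "\<forall>k<n. elen n p k = elen n p 0"
    and "\<kappa> \<noteq> 0"
  shows "(\<forall>k<n. pgrad (curve_length n) p k + of_real \<kappa> * pgrad (curve_area \<sigma> n) p k = 0)
     \<longleftrightarrow> (\<forall>k<n. signed_angle \<sigma> n p k \<noteq> pi \<and>
              2 / elen n p 0 * tan (signed_angle \<sigma> n p k / 2) = \<kappa>)"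
  using per_k[OF assms(1-3)] by blast


end
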